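(* Let $A\in\mathbb Z^{d\times n}$ with $\ker(A)\cap\mathbb N^n=\{0\}$. If a set of moves $B\subseteq\ker(A)$ reduces the distance of the Graver basis $G(A)$, then $B$ is a Markov basis of $A$.
   Context: For $z\in\mathbb Z^n$, $z^\pm\in\mathbb N^n$ are the unique vectors with disjoint supports and $z=z^+-z^-$; $\|\cdot\|$ is the $1$-norm. A Markov basis is a set $B\subseteq\ker(A)$ such that $\{x^{u^+}-x^{u^-}:u\in B\}$ generates the toric ideal $I_A=\langle x^{u^+}-x^{u^-}:u\in\ker(A)\rangle$. The Graver basis $G(A)$ is the set of nonzero $z\in\ker(A)$ admitting no decomposition $z=u+v$ with $u,v\in\ker(A)\setminus\{0\}$, $z^+=u^++v^+$, $z^-=u^-+v^-$. For nonzero $z\in\ker(A)$, $u\in\ker(A)$ reduces the distance of $z$ if there exist $(p,q)\in\{(z^+,z^-),(z^-,z^+)\}$ and $\varepsilon\in\{\pm1\}$ with $p+\varepsilon u\in\mathbb N^n$ and $\|p+\varepsilon u-q\|<\|z\|$; $B$ reduces the distance of $Z$ if every nonzero $z\in Z$ has its distance reduced by some element of $B$. *)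

theory Defs
  imports "HOL-Analysis.Analysis" "HOL-Library.Poly_Mapping"
begin

definition kerZ :: "int^'n^'d \<Rightarrow> (int^'n) set" where
  "kerZ A = {z. A *v z = 0}"

definition natvec :: "int^'n \<Rightarrow> bool" where
  "natvec p \<longleftrightarrow> (\<forall>i. 0 \<le> p $ i)"

definition pos_part :: "int^'n \<Rightarrow> int^'n" where
  "pos_part z = (\<chi> i. max (z $ i) 0)"

definition neg_part :: "int^'n \<Rightarrow> int^'n" where
  "neg_part z = (\<chi> i. max (- (z $ i)) 0)"

definition norm1 :: "int^'n::finite \<Rightarrow> int" where
  "norm1 z = (\<Sum>i\<in>UNIV. \<bar>z $ i\<bar>)"

text \<open>Polynomial ring k[x_i : i in 'n]: monomials are exponent vectors 'n =>0 nat.\<close>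

definition mono :: "int^'n \<Rightarrow> (('n \<Rightarrow>\<^sub>0 nat) \<Rightarrow>\<^sub>0 'k::field)" where
  "mono u = Poly_Mapping.single (Abs_poly_mapping (\<lambda>i. nat (u $ i))) 1"

definition binom :: "int^'n \<Rightarrow> (('n \<Rightarrow>\<^sub>0 nat) \<Rightarrow>\<^sub>0 'k::field)" where
  "binom u = mono (pos_part u) - mono (neg_part u)"

definition ideal_gen :: "'a::comm_ring_1 set \<Rightarrow> 'a set" where
  "ideal_gen S = {(\<Sum>p\<in>F. c p * p) | F c. finite F \<and> F \<subseteq> S}"

definition toric_ideal :: "int^'n::finite^'d \<Rightarrow> (('n \<Rightarrow>\<^sub>0 nat) \<Rightarrow>\<^sub>0 'k::field) set" where
  "toric_ideal A = ideal_gen (binom ` kerZ A)"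

definition markov_basis :: "int^'n::finite^'d \<Rightarrow> (int^'n) set \<Rightarrow> 'k::field itself \<Rightarrow> bool" where
  "markov_basis A B (_::'k itself) \<longleftrightarrow>
     B \<subseteq> kerZ A \<and> ideal_gen ((binom :: _ \<Rightarrow> _ \<Rightarrow>\<^sub>0 'k) ` B) = toric_ideal A"

definition graver_basis :: "int^'n::finite^'d \<Rightarrow> (int^'n) set" where
  "graver_basis A = {z \<in> kerZ A. z \<noteq> 0 \<and>
     \<not> (\<exists>u v. u \<in> kerZ A \<and> v \<in> kerZ A \<and> u \<noteq> 0 \<and> v \<noteq> 0 \<and> z = u + v \<and>
            pos_part z = pos_part u + pos_part v \<and> neg_part z = neg_part u + neg_part v)}"

definition reduces_distance :: "int^'n::finite \<Rightarrow> int^'n \<Rightarrow> bool" where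
  "reduces_distance u z \<longleftrightarrow>
     (\<exists>(p, q)\<in>{(pos_part z, neg_part z), (neg_part z, pos_part z)}.
        \<exists>\<epsilon>\<in>{1::int, -1}. natvec (p + \<epsilon> *s u) \<and> norm1 (p + \<epsilon> *s u - q) < norm1 z)"

definition set_reduces_distance :: "int^'n::finite^'d \<Rightarrow> (int^'n) set \<Rightarrow> (int^'n) set \<Rightarrow> bool" where
  "set_reduces_distance A B Z \<longleftrightarrow>
     (\<forall>z\<in>Z. z \<noteq> 0 \<longrightarrow> (\<exists>u\<in>B. reduces_distance u z))"

end

theory Submission
  imports Defs
begin

interpretation rmod: module "(*) :: 'a::comm_ring_1 \<Rightarrow> 'a \<Rightarrow> 'a"
  by unfold_locales (auto simp: algebra_simps)

lemma ideal_gen_span: "ideal_gen S = rmod.span S"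
  unfolding ideal_gen_def rmod.span_explicit by auto

lemma ker_add: "x \<in> kerZ A \<Longrightarrow> y \<in> kerZ A \<Longrightarrow> x + y \<in> kerZ A"
  by (simp add: kerZ_def matrix_vector_right_distrib)
lemma ker_diff: "x \<in> kerZ A \<Longrightarrow> y \<in> kerZ A \<Longrightarrow> x - y \<in> kerZ A"
  by (simp add: kerZ_def matrix_vector_mult_diff_distrib)
lemma ker_zero: "0 \<in> kerZ A"
  by (simp add: kerZ_def)
lemma ker_neg: "x \<in> kerZ A \<Longrightarrow> - x \<in> kerZ A"
  using ker_diff[OF ker_zero, of x A] by simp

lemma lookup_expv: "Poly_Mapping.lookup (Abs_poly_mapping (\<lambda>i::'n::finite. nat (u $ i))) = (\<lambda>i. nat (u $ i))"
  by (simp add: finite_class.finite)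

lemma mono_add:
  fixes a b :: "int^'n::finite"
  assumes "natvec a" "natvec b"
  shows "(mono (a + b) :: _ \<Rightarrow>\<^sub>0 'k::field) = mono a * mono b"
proof -
  have "Abs_poly_mapping (\<lambda>i. nat ((a + b) $ i)) =
        Abs_poly_mapping (\<lambda>i. nat (a $ i)) + Abs_poly_mapping (\<lambda>i. nat (b $ i))"
    using assms by (intro poly_mapping_eqI) (simp add: lookup_add lookup_expv natvec_def nat_add_distrib)
  then show ?thesis by (simp add: mono_def mult_single)
qed

lemma binom_neg: "(binom (- x) :: _ \<Rightarrow>\<^sub>0 'k::field) = - binom x"
proof -
  have "pos_part (-x) = neg_part x" "neg_part (-x) = pos_part x"
    by (simp_all add: pos_part_def neg_part_def)
  then show ?thesis by (simp add: binom_def)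
qed

lemma binom_zero: "(binom 0 :: _ \<Rightarrow>\<^sub>0 'k::field) = 0"
  by (simp add: binom_def pos_part_def neg_part_def)

lemma natvec_pos: "natvec (pos_part x)" and natvec_neg: "natvec (neg_part x)"
  by (simp_all add: natvec_def pos_part_def neg_part_def)

lemma mono_diff:
  fixes a b :: "int^'n::finite"
  assumes "natvec a" "natvec b"
  shows "(mono a - mono b :: _ \<Rightarrow>\<^sub>0 'k::field) = mono (\<chi> i. min (a$i) (b$i)) * binom (a - b)"
proof -
  let ?m = "\<chi> i. min (a$i) (b$i)"
  have nm: "natvec ?m" using assms by (simp add: natvec_def)
  have "a = ?m + pos_part (a - b)" "b = ?m + neg_part (a - b)"
    by (auto simp: vec_eq_iff pos_part_def neg_part_def)
  then have "(mono a :: _ \<Rightarrow>\<^sub>0 'k) = mono ?m * mono (pos_part (a - b))"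
     "(mono b :: _ \<Rightarrow>\<^sub>0 'k) = mono ?m * mono (neg_part (a - b))"
    using mono_add[OF nm natvec_pos] mono_add[OF nm natvec_neg] by metis+
  then show ?thesis by (simp add: binom_def right_diff_distrib)
qed

lemma mono_diff_span:
  fixes a b :: "int^'n::finite"
  assumes "natvec a" "natvec b" "(binom (a - b) :: _ \<Rightarrow>\<^sub>0 'k::field) \<in> rmod.span S"
  shows "(mono a - mono b :: _ \<Rightarrow>\<^sub>0 'k::field) \<in> rmod.span S"
  using rmod.span_scale[OF assms(3)] mono_diff[OF assms(1,2)] by metis

lemma pw_scalar:
  fixes g z t :: int
  assumes "max g 0 \<le> max z 0" "max (-g) 0 \<le> max (-z) 0" "0 \<le> max g 0 + t"
  shows "0 \<le> max z 0 + t \<and> \<bar>max z 0 + t - max (-z) 0\<bar> \<le> \<bar>z\<bar> - \<bar>g\<bar> + \<bar>max g 0 + t - max (-g) 0\<bar>"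
  using assms by (simp add: max_def abs_if split: if_splits)
lemma pw_scalar2:
  fixes g z t :: int
  assumes "max g 0 \<le> max z 0" "max (-g) 0 \<le> max (-z) 0" "0 \<le> max (-g) 0 + t"
  shows "0 \<le> max (-z) 0 + t \<and> \<bar>max (-z) 0 + t - max z 0\<bar> \<le> \<bar>z\<bar> - \<bar>g\<bar> + \<bar>max (-g) 0 + t - max g 0\<bar>"
  using assms by (simp add: max_def abs_if split: if_splits)

definition conf :: "int^'n \<Rightarrow> int^'n \<Rightarrow> bool" where
  "conf g z \<longleftrightarrow> (\<forall>i. pos_part g $ i \<le> pos_part z $ i \<and> neg_part g $ i \<le> neg_part z $ i)"

lemma norm1_nonneg: "0 \<le> norm1 x"
  by (simp add: norm1_def sum_nonneg)

lemma norm1_pos: "x \<noteq> 0 \<Longrightarrow> 0 < norm1 x"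
proof -
  assume "x \<noteq> 0"
  then obtain i where "x $ i \<noteq> 0" by (auto simp: vec_eq_iff)
  then have "0 < \<bar>x $ i\<bar>" by simp
  also have "\<bar>x $ i\<bar> \<le> norm1 x" unfolding norm1_def
    by (rule member_le_sum) auto
  finally show ?thesis .
qed

lemma graver_below:
  assumes "z \<in> kerZ A" "z \<noteq> 0"
  shows "\<exists>g\<in>graver_basis A. conf g z"
proof -
  let ?P = "\<lambda>g. g \<in> kerZ A \<and> g \<noteq> 0 \<and> conf g z"
  have "?P z" using assms by (simp add: conf_def)
  then obtain g where g: "?P g" and gmin: "\<And>y. ?P y \<Longrightarrow> nat (norm1 g) \<le> nat (norm1 y)"
    using ex_has_least_nat[of ?P z "\<lambda>g. nat (norm1 g)"] by blast
  have "g \<in> graver_basis A"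
    unfolding graver_basis_def
  proof (intro CollectI conjI)
    show "g \<in> kerZ A" "g \<noteq> 0" using g by auto
    show "\<not> (\<exists>u v. u \<in> kerZ A \<and> v \<in> kerZ A \<and> u \<noteq> 0 \<and> v \<noteq> 0 \<and> g = u + v \<and>
            pos_part g = pos_part u + pos_part v \<and> neg_part g = neg_part u + neg_part v)"
    proof
    assume "\<exists>u v. u \<in> kerZ A \<and> v \<in> kerZ A \<and> u \<noteq> 0 \<and> v \<noteq> 0 \<and> g = u + v \<and>
            pos_part g = pos_part u + pos_part v \<and> neg_part g = neg_part u + neg_part v"
    then obtain u v where uv: "u \<in> kerZ A" "v \<in> kerZ A" "u \<noteq> 0" "v \<noteq> 0" "g = u + v"
      "pos_part g = pos_part u + pos_part v" "neg_part g = neg_part u + neg_part v" by blast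
    have pc: "pos_part g $ i = pos_part u $ i + pos_part v $ i"
         "neg_part g $ i = neg_part u $ i + neg_part v $ i" for i
      using uv(6,7) by auto
    have "conf u g"
      unfolding conf_def
    proof
      fix i
      show "pos_part u $ i \<le> pos_part g $ i \<and> neg_part u $ i \<le> neg_part g $ i"
        using pc[of i] by (simp add: pos_part_def neg_part_def)
    qed
    then have "conf u z" using g by (auto simp: conf_def intro: order_trans)
    then have "nat (norm1 g) \<le> nat (norm1 u)" using gmin uv by blast
    moreover have "\<bar>g $ i\<bar> = \<bar>u $ i\<bar> + \<bar>v $ i\<bar>" for i
      using pc[of i] by (simp add: pos_part_def neg_part_def max_def abs_if split: if_splits)
    then have "norm1 g = norm1 u + norm1 v"
      by (simp add: norm1_def sum.distrib)
    moreover have "0 < norm1 v" using norm1_pos uv(4) by blast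
    ultimately show False using norm1_nonneg[of u] by linarith
  qed
  qed
  then show ?thesis using g by blast
qed

lemma reduce_all:
  assumes "set_reduces_distance A B (graver_basis A)" "z \<in> kerZ A" "z \<noteq> 0"
  shows "\<exists>u\<in>B. reduces_distance u z"
proof -
  obtain g where g: "g \<in> graver_basis A" "conf g z" using graver_below assms(2,3) by blast
  then have "g \<noteq> 0" by (simp add: graver_basis_def)
  then obtain u where u: "u \<in> B" "reduces_distance u g"
    using assms(1) g(1) unfolding set_reduces_distance_def by blast
  then obtain p q \<epsilon> where pq: "(p, q) \<in> {(pos_part g, neg_part g), (neg_part g, pos_part g)}"
    and e: "\<epsilon> \<in> {1::int, -1}" and nv: "natvec (p + \<epsilon> *s u)"
    and lt: "norm1 (p + \<epsilon> *s u - q) < norm1 g"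
    unfolding reduces_distance_def by blast
  define P where "P = (if p = pos_part g then pos_part z else neg_part z)"
  define Q where "Q = (if p = pos_part g then neg_part z else pos_part z)"
  have PQ: "(P, Q) \<in> {(pos_part z, neg_part z), (neg_part z, pos_part z)}"
    by (simp add: P_def Q_def)
  have ci: "\<forall>i. pos_part g $ i \<le> pos_part z $ i \<and> neg_part g $ i \<le> neg_part z $ i"
    using g(2) by (simp add: conf_def)
  have cases: "(p = pos_part g \<and> q = neg_part g \<and> P = pos_part z \<and> Q = neg_part z) \<or>
      (p = neg_part g \<and> q = pos_part g \<and> P = neg_part z \<and> Q = pos_part z)"
    using pq by (auto simp: P_def Q_def)
  have pw: "0 \<le> (P + \<epsilon> *s u) $ i \<and>
      \<bar>(P + \<epsilon> *s u - Q) $ i\<bar> \<le> \<bar>z $ i\<bar> - \<bar>g $ i\<bar> + \<bar>(p + \<epsilon> *s u - q) $ i\<bar>" for i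
  proof -
    have n: "0 \<le> (p + \<epsilon> *s u) $ i" using nv by (simp add: natvec_def)
    have c: "pos_part g $ i \<le> pos_part z $ i \<and> neg_part g $ i \<le> neg_part z $ i" using ci by blast
    show ?thesis using cases
    proof
      assume h: "p = pos_part g \<and> q = neg_part g \<and> P = pos_part z \<and> Q = neg_part z"
      then have h: "p = pos_part g" "q = neg_part g" "P = pos_part z" "Q = neg_part z" by auto
      show ?thesis using n c pw_scalar[of "g$i" "z$i" "\<epsilon> * u$i"] unfolding h by (simp add: pos_part_def neg_part_def)
    next
      assume h: "p = neg_part g \<and> q = pos_part g \<and> P = neg_part z \<and> Q = pos_part z"
      then have h: "p = neg_part g" "q = pos_part g" "P = neg_part z" "Q = pos_part z" by auto
      show ?thesis using n c pw_scalar2[of "g$i" "z$i" "\<epsilon> * u$i"] unfolding h by (simp add: pos_part_def neg_part_def)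
    qed
  qed
  have "natvec (P + \<epsilon> *s u)" using pw by (simp add: natvec_def)
  moreover have "norm1 (P + \<epsilon> *s u - Q) \<le> norm1 z - norm1 g + norm1 (p + \<epsilon> *s u - q)"
  proof -
    have "norm1 (P + \<epsilon> *s u - Q) \<le> (\<Sum>i\<in>UNIV. \<bar>z $ i\<bar> - \<bar>g $ i\<bar> + \<bar>(p + \<epsilon> *s u - q) $ i\<bar>)"
      unfolding norm1_def by (rule sum_mono) (use pw in blast)
    also have "\<dots> = norm1 z - norm1 g + norm1 (p + \<epsilon> *s u - q)"
      by (simp add: norm1_def sum.distrib sum_subtractf)
    finally show ?thesis .
  qed
  then have "norm1 (P + \<epsilon> *s u - Q) < norm1 z" using lt by linarith
  ultimately have "reduces_distance u z"
    unfolding reduces_distance_def using PQ e by blast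
  then show ?thesis using u by blast
qed

lemma pos_neg_diff: "pos_part z - neg_part z = z"
  by (simp add: vec_eq_iff pos_part_def neg_part_def max_def)

lemma binom_in_span:
  assumes red: "\<forall>z\<in>kerZ A. z \<noteq> 0 \<longrightarrow> (\<exists>u\<in>B. reduces_distance u z)"
    and BK: "B \<subseteq> kerZ A" and zK: "z \<in> kerZ A"
  shows "(binom z :: _ \<Rightarrow>\<^sub>0 'k::field) \<in> rmod.span (binom ` B)"
  using zK
proof (induction "nat (norm1 z)" arbitrary: z rule: less_induct)
  case less
  let ?S = "rmod.span ((binom :: _ \<Rightarrow> _ \<Rightarrow>\<^sub>0 'k) ` B)"
  show ?case
  proof (cases "z = 0")
    case True then show ?thesis by (simp add: binom_zero rmod.span_zero)
  next
    case False
    then obtain u where u: "u \<in> B" "reduces_distance u z" using red less.prems by blast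
    then obtain p q \<epsilon> where pq: "(p, q) \<in> {(pos_part z, neg_part z), (neg_part z, pos_part z)}"
      and e: "\<epsilon> \<in> {1::int, -1}" and nv: "natvec (p + \<epsilon> *s u)"
      and lt: "norm1 (p + \<epsilon> *s u - q) < norm1 z"
      unfolding reduces_distance_def by blast
    define r where "r = p + \<epsilon> *s u"
    have uK: "u \<in> kerZ A" using u BK by blast
    have bu: "(binom u :: _ \<Rightarrow>\<^sub>0 'k) \<in> ?S" using u by (intro rmod.span_base) blast
    have eu: "\<epsilon> *s u = u \<or> \<epsilon> *s u = - u" using e by (auto simp: vec_eq_iff)
    have np: "natvec p" "natvec q" using pq natvec_pos natvec_neg by auto
    have pqz: "p - q = z \<or> p - q = - z" using pq pos_neg_diff[of z] by (auto simp: algebra_simps)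
    have b1: "(binom (p - r) :: _ \<Rightarrow>\<^sub>0 'k) \<in> ?S"
    proof -
      have "p - r = - (\<epsilon> *s u)" by (simp add: r_def)
      then show ?thesis using eu bu binom_neg[of u, where 'k='k] rmod.span_neg[OF bu] by auto
    qed
    have rqK: "r - q \<in> kerZ A"
    proof -
      have "r - q = (p - q) + \<epsilon> *s u" by (simp add: r_def algebra_simps)
      moreover have "p - q \<in> kerZ A" using pqz less.prems ker_neg by auto
      moreover have "\<epsilon> *s u \<in> kerZ A" using eu uK ker_neg by auto
      ultimately show ?thesis using ker_add by metis
    qed
    have b2: "(binom (r - q) :: _ \<Rightarrow>\<^sub>0 'k) \<in> ?S"
      using less.hyps[OF _ rqK] lt norm1_nonneg[of "r - q"] by (simp add: r_def)
    have nr: "natvec r" using nv by (simp add: r_def)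
    have "(mono p - mono q :: _ \<Rightarrow>\<^sub>0 'k) = (mono p - mono r) + (mono r - mono q)" by simp
    also have "\<dots> \<in> ?S"
      by (intro rmod.span_add mono_diff_span np nr b1 b2)
    finally have m: "(mono p - mono q :: _ \<Rightarrow>\<^sub>0 'k) \<in> ?S" .
    show ?thesis using pq
    proof
      assume "(p, q) = (pos_part z, neg_part z)"
      then show ?thesis using m by (simp add: binom_def)
    next
      assume "(p, q) \<in> {(neg_part z, pos_part z)}"
      then have "(binom z :: _ \<Rightarrow>\<^sub>0 'k) = - (mono p - mono q)" by (simp add: binom_def)
      then show ?thesis using rmod.span_neg[OF m] by simp
    qed
  qed
qed

theorem corollary7p6:
  fixes A :: "int^'n::finite^'d::finite" and B :: "(int^'n) set"
  assumes "kerZ A \<inter> {z. natvec z} = {0}"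
    and "B \<subseteq> kerZ A"
    and "set_reduces_distance A B (graver_basis A)"
  shows "markov_basis A B TYPE('k::field)"
proof -
  have red: "\<forall>z\<in>kerZ A. z \<noteq> 0 \<longrightarrow> (\<exists>u\<in>B. reduces_distance u z)"
    using reduce_all[OF assms(3)] by blast
  let ?b = "binom :: _ \<Rightarrow> _ \<Rightarrow>\<^sub>0 'k"
  have "rmod.span (?b ` B) \<subseteq> rmod.span (?b ` kerZ A)"
    using assms(2) by (intro rmod.span_mono) blast
  moreover have "rmod.span (?b ` kerZ A) \<subseteq> rmod.span (?b ` B)"
    using binom_in_span[OF red assms(2)] by (intro rmod.span_minimal) auto
  ultimately show ?thesis
    unfolding markov_basis_def toric_ideal_def ideal_gen_span using assms(2) by blast
qed

end
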